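(* Consider simultaneous two-player weighted congestion games with affine costs and proportional cost functions, where the player weights $w_1,w_2\ge0$ (with $w_1+w_2>0$) are arbitrary. The price of anarchy (supremum over all weights and all instances, with respect to pure Nash equilibria) is approximately $2.0411$, both for general congestion games and for network routing games, and it is attained for $w_1/w_2 \approx 1.2704$ and for $w_2/w_1\approx 1.2704$.
   Context: A weighted two-player congestion game with affine costs consists of a finite set $R$ of resources, coefficients $\alpha_r,\beta_r \geq 0$ for each $r\in R$, two players $i=1,2$ with weights $w_i\ge 0$, and for each player $i$ a nonempty finite set $\mathcal{A}_i \subseteq 2^R$ of actions. For an action profile $A=(A_1,A_2)$ the load of $r$ is $x_r(A)=\sum_{j:\, r\in A_j} w_j$. With proportional costs, player $i$ pays $C_i(A)=w_i\sum_{r\in A_i}(\alpha_r+\beta_r x_r(A))$. The social cost is $C(A)=C_1(A)+C_2(A)$. In a network routing game, $R$ is the arc set of a directed graph, player $i$ has a source $s_i$ and sink $t_i$, and $\mathcal{A}_i$ is the set of arc sets of directed $s_i$–$t_i$ paths. A pure Nash equilibrium is a profile from which no player can lower her cost by unilaterally changing her action. The price of anarchy of an instance is the maximum over Nash equilibria $A$ of $C(A)/\min_{A'} C(A')$; the price of anarchy of a class is the supremum over all instances (with positive optimal social cost). *)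

theory Defs
  imports Complex_Main
begin

text \<open>Resources are natural numbers (any finite resource set can be
  relabelled by naturals).\<close>

definition load :: "real \<Rightarrow> real \<Rightarrow> nat set \<Rightarrow> nat set \<Rightarrow> nat \<Rightarrow> real" where
  "load w1 w2 S1 S2 r = (if r \<in> S1 then w1 else 0) + (if r \<in> S2 then w2 else 0)"

definition cost1 :: "(nat \<Rightarrow> real) \<Rightarrow> (nat \<Rightarrow> real) \<Rightarrow> real \<Rightarrow> real \<Rightarrow> nat set \<Rightarrow> nat set \<Rightarrow> real" where
  "cost1 a b w1 w2 S1 S2 = w1 * (\<Sum>r\<in>S1. a r + b r * load w1 w2 S1 S2 r)"

definition cost2 :: "(nat \<Rightarrow> real) \<Rightarrow> (nat \<Rightarrow> real) \<Rightarrow> real \<Rightarrow> real \<Rightarrow> nat set \<Rightarrow> nat set \<Rightarrow> real" where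
  "cost2 a b w1 w2 S1 S2 = w2 * (\<Sum>r\<in>S2. a r + b r * load w1 w2 S1 S2 r)"

definition social_cost :: "(nat \<Rightarrow> real) \<Rightarrow> (nat \<Rightarrow> real) \<Rightarrow> real \<Rightarrow> real \<Rightarrow> nat set \<Rightarrow> nat set \<Rightarrow> real" where
  "social_cost a b w1 w2 S1 S2 = cost1 a b w1 w2 S1 S2 + cost2 a b w1 w2 S1 S2"

definition valid_game :: "nat set \<Rightarrow> (nat \<Rightarrow> real) \<Rightarrow> (nat \<Rightarrow> real) \<Rightarrow> nat set set \<Rightarrow> nat set set \<Rightarrow> bool" where
  "valid_game R a b A1 A2 \<longleftrightarrow> finite R \<and> (\<forall>r\<in>R. a r \<ge> 0 \<and> b r \<ge> 0)
     \<and> finite A1 \<and> A1 \<noteq> {} \<and> (\<forall>S\<in>A1. S \<subseteq> R)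
     \<and> finite A2 \<and> A2 \<noteq> {} \<and> (\<forall>S\<in>A2. S \<subseteq> R)"

definition is_NE :: "(nat \<Rightarrow> real) \<Rightarrow> (nat \<Rightarrow> real) \<Rightarrow> real \<Rightarrow> real \<Rightarrow> nat set set \<Rightarrow> nat set set \<Rightarrow> nat set \<Rightarrow> nat set \<Rightarrow> bool" where
  "is_NE a b w1 w2 A1 A2 S1 S2 \<longleftrightarrow> S1 \<in> A1 \<and> S2 \<in> A2
     \<and> (\<forall>T\<in>A1. cost1 a b w1 w2 S1 S2 \<le> cost1 a b w1 w2 T S2)
     \<and> (\<forall>T\<in>A2. cost2 a b w1 w2 S1 S2 \<le> cost2 a b w1 w2 S1 T)"

definition opt_cost :: "(nat \<Rightarrow> real) \<Rightarrow> (nat \<Rightarrow> real) \<Rightarrow> real \<Rightarrow> real \<Rightarrow> nat set set \<Rightarrow> nat set set \<Rightarrow> real" where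
  "opt_cost a b w1 w2 A1 A2 = Min {social_cost a b w1 w2 S1 S2 | S1 S2. S1 \<in> A1 \<and> S2 \<in> A2}"

definition poa_ratios :: "real \<Rightarrow> real \<Rightarrow> real set" where
  "poa_ratios w1 w2 = {social_cost a b w1 w2 S1 S2 / opt_cost a b w1 w2 A1 A2 | R a b A1 A2 S1 S2.
      valid_game R a b A1 A2 \<and> opt_cost a b w1 w2 A1 A2 > 0 \<and> is_NE a b w1 w2 A1 A2 S1 S2}"

text \<open>Directed multigraph: arcs are naturals in E with tail function src and
  head function dst.\<close>
definition is_st_path :: "nat set \<Rightarrow> (nat \<Rightarrow> nat) \<Rightarrow> (nat \<Rightarrow> nat) \<Rightarrow> nat \<Rightarrow> nat \<Rightarrow> nat set \<Rightarrow> bool" where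
  "is_st_path E src dst s t P \<longleftrightarrow> (\<exists>es vs. set es \<subseteq> E \<and> distinct es \<and> P = set es
      \<and> length vs = length es + 1 \<and> distinct vs \<and> vs ! 0 = s \<and> vs ! length es = t
      \<and> (\<forall>i<length es. src (es ! i) = vs ! i \<and> dst (es ! i) = vs ! (i + 1)))"

definition paths :: "nat set \<Rightarrow> (nat \<Rightarrow> nat) \<Rightarrow> (nat \<Rightarrow> nat) \<Rightarrow> nat \<Rightarrow> nat \<Rightarrow> nat set set" where
  "paths E src dst s t = {P. is_st_path E src dst s t P}"

definition network_ratios :: "real \<Rightarrow> real \<Rightarrow> real set" where
  "network_ratios w1 w2 = {social_cost a b w1 w2 S1 S2
        / opt_cost a b w1 w2 (paths E src dst s1 t1) (paths E src dst s2 t2)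
      | E src dst s1 t1 s2 t2 a b S1 S2.
      valid_game E a b (paths E src dst s1 t1) (paths E src dst s2 t2)
      \<and> opt_cost a b w1 w2 (paths E src dst s1 t1) (paths E src dst s2 t2) > 0
      \<and> is_NE a b w1 w2 (paths E src dst s1 t1) (paths E src dst s2 t2) S1 S2}"

definition admissible_weights :: "real \<Rightarrow> real \<Rightarrow> bool" where
  "admissible_weights w1 w2 \<longleftrightarrow> w1 \<ge> 0 \<and> w2 \<ge> 0 \<and> w1 + w2 > 0"

definition poa_all :: "real set" where
  "poa_all = (\<Union>{poa_ratios w1 w2 | w1 w2. admissible_weights w1 w2})"

definition network_poa_all :: "real set" where
  "network_poa_all = (\<Union>{network_ratios w1 w2 | w1 w2. admissible_weights w1 w2})"

definition sup_is :: "real set \<Rightarrow> real \<Rightarrow> bool" where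
  "sup_is S \<rho> \<longleftrightarrow> S \<noteq> {} \<and> bdd_above S \<and> Sup S = \<rho>"

end

theory Submission
  imports Defs
begin

definition ind :: "bool \<Rightarrow> real \<Rightarrow> real" where "ind s w = (if s then w else 0)"

definition res_lhs :: "real \<Rightarrow> real \<Rightarrow> real \<Rightarrow> real \<Rightarrow> bool \<Rightarrow> bool \<Rightarrow> bool \<Rightarrow> bool \<Rightarrow> real" where
  "res_lhs a b w1 w2 s1 s2 t1 t2 =
     (w1*w1*w1 + w1*w2*w2 + w2*w2*w2) * ((ind s1 w1 + ind s2 w2) * (a + b * (ind s1 w1 + ind s2 w2)))
   + w1 * (w1*w1 + w1*w2 + w2*w2) * (ind t1 w1 * (a + b * (ind t1 w1 + ind s2 w2)) - ind s1 w1 * (a + b * (ind s1 w1 + ind s2 w2)))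
   + (w1*w1*w1 + w1*w2*w2 + w2*w2*w2) * (ind t2 w2 * (a + b * (ind s1 w1 + ind t2 w2)) - ind s2 w2 * (a + b * (ind s1 w1 + ind s2 w2)))"

definition res_rhs :: "real \<Rightarrow> real \<Rightarrow> real \<Rightarrow> real \<Rightarrow> bool \<Rightarrow> bool \<Rightarrow> bool \<Rightarrow> bool \<Rightarrow> real" where
  "res_rhs a b w1 w2 s1 s2 t1 t2 =
     (w1 + w2) * (w1*w1 + w1*w2 + w2*w2) * ((ind t1 w1 + ind t2 w2) * (a + b * (ind t1 w1 + ind t2 w2)))"

lemma res_0000:
  fixes a b u d :: real
  assumes "0 \<le> a" "0 \<le> b" "0 \<le> u" "0 \<le> d"
  shows "res_lhs a b (u+d) u False False False False \<le> res_rhs a b (u+d) u False False False False"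
proof -
  have e: "res_rhs a b (u+d) u False False False False - res_lhs a b (u+d) u False False False False = 0"
    by (simp add: res_lhs_def res_rhs_def ind_def algebra_simps)
  have "0 \<le> (0::real)"
    by simp
  then show ?thesis using e by linarith
qed

lemma res_0001:
  fixes a b u d :: real
  assumes "0 \<le> a" "0 \<le> b" "0 \<le> u" "0 \<le> d"
  shows "res_lhs a b (u+d) u False False False True \<le> res_rhs a b (u+d) u False False False True"
proof -
  have e: "res_rhs a b (u+d) u False False False True - res_lhs a b (u+d) u False False False True = 2 * (a * u * u * d * d) + 5 * (a * u * u * u * d) + 3 * (a * u * u * u * u) + 2 * (b * u * u * u * d * d) + 5 * (b * u * u * u * u * d) + 3 * (b * u * u * u * u * u)"
    by (simp add: res_lhs_def res_rhs_def ind_def algebra_simps)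
  have "0 \<le> (2 * (a * u * u * d * d) + 5 * (a * u * u * u * d) + 3 * (a * u * u * u * u) + 2 * (b * u * u * u * d * d) + 5 * (b * u * u * u * u * d) + 3 * (b * u * u * u * u * u))"
    using assms by (intro add_nonneg_nonneg mult_nonneg_nonneg; simp)
  then show ?thesis using e by linarith
qed

lemma res_0010:
  fixes a b u d :: real
  assumes "0 \<le> a" "0 \<le> b" "0 \<le> u" "0 \<le> d"
  shows "res_lhs a b (u+d) u False False True False \<le> res_rhs a b (u+d) u False False True False"
proof -
  have e: "res_rhs a b (u+d) u False False True False - res_lhs a b (u+d) u False False True False = 1 * (a * u * d * d * d) + 4 * (a * u * u * d * d) + 6 * (a * u * u * u * d) + 3 * (a * u * u * u * u) + 1 * (b * u * d * d * d * d) + 5 * (b * u * u * d * d * d) + 10 * (b * u * u * u * d * d) + 9 * (b * u * u * u * u * d) + 3 * (b * u * u * u * u * u)"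
    by (simp add: res_lhs_def res_rhs_def ind_def algebra_simps)
  have "0 \<le> (1 * (a * u * d * d * d) + 4 * (a * u * u * d * d) + 6 * (a * u * u * u * d) + 3 * (a * u * u * u * u) + 1 * (b * u * d * d * d * d) + 5 * (b * u * u * d * d * d) + 10 * (b * u * u * u * d * d) + 9 * (b * u * u * u * u * d) + 3 * (b * u * u * u * u * u))"
    using assms by (intro add_nonneg_nonneg mult_nonneg_nonneg; simp)
  then show ?thesis using e by linarith
qed

lemma res_0011:
  fixes a b u d :: real
  assumes "0 \<le> a" "0 \<le> b" "0 \<le> u" "0 \<le> d"
  shows "res_lhs a b (u+d) u False False True True \<le> res_rhs a b (u+d) u False False True True"
proof -
  have e: "res_rhs a b (u+d) u False False True True - res_lhs a b (u+d) u False False True True = 1 * (a * u * d * d * d) + 6 * (a * u * u * d * d) + 11 * (a * u * u * u * d) + 6 * (a * u * u * u * u) + 3 * (b * u * d * d * d * d) + 17 * (b * u * u * d * d * d) + 40 * (b * u * u * u * d * d) + 44 * (b * u * u * u * u * d) + 18 * (b * u * u * u * u * u)"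
    by (simp add: res_lhs_def res_rhs_def ind_def algebra_simps)
  have "0 \<le> (1 * (a * u * d * d * d) + 6 * (a * u * u * d * d) + 11 * (a * u * u * u * d) + 6 * (a * u * u * u * u) + 3 * (b * u * d * d * d * d) + 17 * (b * u * u * d * d * d) + 40 * (b * u * u * u * d * d) + 44 * (b * u * u * u * u * d) + 18 * (b * u * u * u * u * u))"
    using assms by (intro add_nonneg_nonneg mult_nonneg_nonneg; simp)
  then show ?thesis using e by linarith
qed

lemma res_0100:
  fixes a b u d :: real
  assumes "0 \<le> a" "0 \<le> b" "0 \<le> u" "0 \<le> d"
  shows "res_lhs a b (u+d) u False True False False \<le> res_rhs a b (u+d) u False True False False"
proof -
  have e: "res_rhs a b (u+d) u False True False False - res_lhs a b (u+d) u False True False False = 0"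
    by (simp add: res_lhs_def res_rhs_def ind_def algebra_simps)
  have "0 \<le> (0::real)"
    by simp
  then show ?thesis using e by linarith
qed

lemma res_0101:
  fixes a b u d :: real
  assumes "0 \<le> a" "0 \<le> b" "0 \<le> u" "0 \<le> d"
  shows "res_lhs a b (u+d) u False True False True \<le> res_rhs a b (u+d) u False True False True"
proof -
  have e: "res_rhs a b (u+d) u False True False True - res_lhs a b (u+d) u False True False True = 2 * (a * u * u * d * d) + 5 * (a * u * u * u * d) + 3 * (a * u * u * u * u) + 2 * (b * u * u * u * d * d) + 5 * (b * u * u * u * u * d) + 3 * (b * u * u * u * u * u)"
    by (simp add: res_lhs_def res_rhs_def ind_def algebra_simps)
  have "0 \<le> (2 * (a * u * u * d * d) + 5 * (a * u * u * u * d) + 3 * (a * u * u * u * u) + 2 * (b * u * u * u * d * d) + 5 * (b * u * u * u * u * d) + 3 * (b * u * u * u * u * u))"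
    using assms by (intro add_nonneg_nonneg mult_nonneg_nonneg; simp)
  then show ?thesis using e by linarith
qed

lemma res_0110:
  fixes a b u d :: real
  assumes "0 \<le> a" "0 \<le> b" "0 \<le> u" "0 \<le> d"
  shows "res_lhs a b (u+d) u False True True False \<le> res_rhs a b (u+d) u False True True False"
proof -
  have e: "res_rhs a b (u+d) u False True True False - res_lhs a b (u+d) u False True True False = 1 * (a * u * d * d * d) + 4 * (a * u * u * d * d) + 6 * (a * u * u * u * d) + 3 * (a * u * u * u * u)"
    by (simp add: res_lhs_def res_rhs_def ind_def algebra_simps)
  have "0 \<le> (1 * (a * u * d * d * d) + 4 * (a * u * u * d * d) + 6 * (a * u * u * u * d) + 3 * (a * u * u * u * u))"
    using assms by (intro add_nonneg_nonneg mult_nonneg_nonneg; simp)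
  then show ?thesis using e by linarith
qed

lemma res_0111:
  fixes a b u d :: real
  assumes "0 \<le> a" "0 \<le> b" "0 \<le> u" "0 \<le> d"
  shows "res_lhs a b (u+d) u False True True True \<le> res_rhs a b (u+d) u False True True True"
proof -
  have e: "res_rhs a b (u+d) u False True True True - res_lhs a b (u+d) u False True True True = 1 * (a * u * d * d * d) + 6 * (a * u * u * d * d) + 11 * (a * u * u * u * d) + 6 * (a * u * u * u * u) + 2 * (b * u * d * d * d * d) + 12 * (b * u * u * d * d * d) + 30 * (b * u * u * u * d * d) + 35 * (b * u * u * u * u * d) + 15 * (b * u * u * u * u * u)"
    by (simp add: res_lhs_def res_rhs_def ind_def algebra_simps)
  have "0 \<le> (1 * (a * u * d * d * d) + 6 * (a * u * u * d * d) + 11 * (a * u * u * u * d) + 6 * (a * u * u * u * u) + 2 * (b * u * d * d * d * d) + 12 * (b * u * u * d * d * d) + 30 * (b * u * u * u * d * d) + 35 * (b * u * u * u * u * d) + 15 * (b * u * u * u * u * u))"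
    using assms by (intro add_nonneg_nonneg mult_nonneg_nonneg; simp)
  then show ?thesis using e by linarith
qed

lemma res_1000:
  fixes a b u d :: real
  assumes "0 \<le> a" "0 \<le> b" "0 \<le> u" "0 \<le> d"
  shows "res_lhs a b (u+d) u True False False False \<le> res_rhs a b (u+d) u True False False False"
proof -
  have e: "res_rhs a b (u+d) u True False False False - res_lhs a b (u+d) u True False False False = 1 * (a * u * d * d * d) + 3 * (a * u * u * d * d) + 2 * (a * u * u * u * d) + 1 * (b * u * d * d * d * d) + 4 * (b * u * u * d * d * d) + 5 * (b * u * u * u * d * d) + 2 * (b * u * u * u * u * d)"
    by (simp add: res_lhs_def res_rhs_def ind_def algebra_simps)
  have "0 \<le> (1 * (a * u * d * d * d) + 3 * (a * u * u * d * d) + 2 * (a * u * u * u * d) + 1 * (b * u * d * d * d * d) + 4 * (b * u * u * d * d * d) + 5 * (b * u * u * u * d * d) + 2 * (b * u * u * u * u * d))"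
    using assms by (intro add_nonneg_nonneg mult_nonneg_nonneg; simp)
  then show ?thesis using e by linarith
qed

lemma res_1001:
  fixes a b u d :: real
  assumes "0 \<le> a" "0 \<le> b" "0 \<le> u" "0 \<le> d"
  shows "res_lhs a b (u+d) u True False False True \<le> res_rhs a b (u+d) u True False False True"
proof -
  have e: "res_rhs a b (u+d) u True False False True - res_lhs a b (u+d) u True False False True = 1 * (a * u * d * d * d) + 5 * (a * u * u * d * d) + 7 * (a * u * u * u * d) + 3 * (a * u * u * u * u)"
    by (simp add: res_lhs_def res_rhs_def ind_def algebra_simps)
  have "0 \<le> (1 * (a * u * d * d * d) + 5 * (a * u * u * d * d) + 7 * (a * u * u * u * d) + 3 * (a * u * u * u * u))"
    using assms by (intro add_nonneg_nonneg mult_nonneg_nonneg; simp)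
  then show ?thesis using e by linarith
qed

lemma res_1010:
  fixes a b u d :: real
  assumes "0 \<le> a" "0 \<le> b" "0 \<le> u" "0 \<le> d"
  shows "res_lhs a b (u+d) u True False True False \<le> res_rhs a b (u+d) u True False True False"
proof -
  have e: "res_rhs a b (u+d) u True False True False - res_lhs a b (u+d) u True False True False = 2 * (a * u * d * d * d) + 7 * (a * u * u * d * d) + 8 * (a * u * u * u * d) + 3 * (a * u * u * u * u) + 2 * (b * u * d * d * d * d) + 9 * (b * u * u * d * d * d) + 15 * (b * u * u * u * d * d) + 11 * (b * u * u * u * u * d) + 3 * (b * u * u * u * u * u)"
    by (simp add: res_lhs_def res_rhs_def ind_def algebra_simps)
  have "0 \<le> (2 * (a * u * d * d * d) + 7 * (a * u * u * d * d) + 8 * (a * u * u * u * d) + 3 * (a * u * u * u * u) + 2 * (b * u * d * d * d * d) + 9 * (b * u * u * d * d * d) + 15 * (b * u * u * u * d * d) + 11 * (b * u * u * u * u * d) + 3 * (b * u * u * u * u * u))"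
    using assms by (intro add_nonneg_nonneg mult_nonneg_nonneg; simp)
  then show ?thesis using e by linarith
qed

lemma res_1011:
  fixes a b u d :: real
  assumes "0 \<le> a" "0 \<le> b" "0 \<le> u" "0 \<le> d"
  shows "res_lhs a b (u+d) u True False True True \<le> res_rhs a b (u+d) u True False True True"
proof -
  have e: "res_rhs a b (u+d) u True False True True - res_lhs a b (u+d) u True False True True = 2 * (a * u * d * d * d) + 9 * (a * u * u * d * d) + 13 * (a * u * u * u * d) + 6 * (a * u * u * u * u) + 3 * (b * u * d * d * d * d) + 17 * (b * u * u * d * d * d) + 38 * (b * u * u * u * d * d) + 39 * (b * u * u * u * u * d) + 15 * (b * u * u * u * u * u)"
    by (simp add: res_lhs_def res_rhs_def ind_def algebra_simps)
  have "0 \<le> (2 * (a * u * d * d * d) + 9 * (a * u * u * d * d) + 13 * (a * u * u * u * d) + 6 * (a * u * u * u * u) + 3 * (b * u * d * d * d * d) + 17 * (b * u * u * d * d * d) + 38 * (b * u * u * u * d * d) + 39 * (b * u * u * u * u * d) + 15 * (b * u * u * u * u * u))"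
    using assms by (intro add_nonneg_nonneg mult_nonneg_nonneg; simp)
  then show ?thesis using e by linarith
qed

lemma res_1100:
  fixes a b u d :: real
  assumes "0 \<le> a" "0 \<le> b" "0 \<le> u" "0 \<le> d"
  shows "res_lhs a b (u+d) u True True False False \<le> res_rhs a b (u+d) u True True False False"
proof -
  have e: "res_rhs a b (u+d) u True True False False - res_lhs a b (u+d) u True True False False = 1 * (a * u * d * d * d) + 3 * (a * u * u * d * d) + 2 * (a * u * u * u * d) + 1 * (b * u * d * d * d * d) + 5 * (b * u * u * d * d * d) + 8 * (b * u * u * u * d * d) + 4 * (b * u * u * u * u * d)"
    by (simp add: res_lhs_def res_rhs_def ind_def algebra_simps)
  have "0 \<le> (1 * (a * u * d * d * d) + 3 * (a * u * u * d * d) + 2 * (a * u * u * u * d) + 1 * (b * u * d * d * d * d) + 5 * (b * u * u * d * d * d) + 8 * (b * u * u * u * d * d) + 4 * (b * u * u * u * u * d))"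
    using assms by (intro add_nonneg_nonneg mult_nonneg_nonneg; simp)
  then show ?thesis using e by linarith
qed

lemma res_1101:
  fixes a b u d :: real
  assumes "0 \<le> a" "0 \<le> b" "0 \<le> u" "0 \<le> d"
  shows "res_lhs a b (u+d) u True True False True \<le> res_rhs a b (u+d) u True True False True"
proof -
  have e: "res_rhs a b (u+d) u True True False True - res_lhs a b (u+d) u True True False True = 1 * (a * u * d * d * d) + 5 * (a * u * u * d * d) + 7 * (a * u * u * u * d) + 3 * (a * u * u * u * u) + 1 * (b * u * u * d * d * d) + 3 * (b * u * u * u * d * d) + 2 * (b * u * u * u * u * d)"
    by (simp add: res_lhs_def res_rhs_def ind_def algebra_simps)
  have "0 \<le> (1 * (a * u * d * d * d) + 5 * (a * u * u * d * d) + 7 * (a * u * u * u * d) + 3 * (a * u * u * u * u) + 1 * (b * u * u * d * d * d) + 3 * (b * u * u * u * d * d) + 2 * (b * u * u * u * u * d))"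
    using assms by (intro add_nonneg_nonneg mult_nonneg_nonneg; simp)
  then show ?thesis using e by linarith
qed

lemma res_1110:
  fixes a b u d :: real
  assumes "0 \<le> a" "0 \<le> b" "0 \<le> u" "0 \<le> d"
  shows "res_lhs a b (u+d) u True True True False \<le> res_rhs a b (u+d) u True True True False"
proof -
  have e: "res_rhs a b (u+d) u True True True False - res_lhs a b (u+d) u True True True False = 2 * (a * u * d * d * d) + 7 * (a * u * u * d * d) + 8 * (a * u * u * u * d) + 3 * (a * u * u * u * u) + 1 * (b * u * d * d * d * d) + 5 * (b * u * u * d * d * d) + 8 * (b * u * u * u * d * d) + 4 * (b * u * u * u * u * d)"
    by (simp add: res_lhs_def res_rhs_def ind_def algebra_simps)
  have "0 \<le> (2 * (a * u * d * d * d) + 7 * (a * u * u * d * d) + 8 * (a * u * u * u * d) + 3 * (a * u * u * u * u) + 1 * (b * u * d * d * d * d) + 5 * (b * u * u * d * d * d) + 8 * (b * u * u * u * d * d) + 4 * (b * u * u * u * u * d))"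
    using assms by (intro add_nonneg_nonneg mult_nonneg_nonneg; simp)
  then show ?thesis using e by linarith
qed

lemma res_1111:
  fixes a b u d :: real
  assumes "0 \<le> a" "0 \<le> b" "0 \<le> u" "0 \<le> d"
  shows "res_lhs a b (u+d) u True True True True \<le> res_rhs a b (u+d) u True True True True"
proof -
  have e: "res_rhs a b (u+d) u True True True True - res_lhs a b (u+d) u True True True True = 2 * (a * u * d * d * d) + 9 * (a * u * u * d * d) + 13 * (a * u * u * u * d) + 6 * (a * u * u * u * u) + 2 * (b * u * d * d * d * d) + 13 * (b * u * u * d * d * d) + 31 * (b * u * u * u * d * d) + 32 * (b * u * u * u * u * d) + 12 * (b * u * u * u * u * u)"
    by (simp add: res_lhs_def res_rhs_def ind_def algebra_simps)
  have "0 \<le> (2 * (a * u * d * d * d) + 9 * (a * u * u * d * d) + 13 * (a * u * u * u * d) + 6 * (a * u * u * u * u) + 2 * (b * u * d * d * d * d) + 13 * (b * u * u * d * d * d) + 31 * (b * u * u * u * d * d) + 32 * (b * u * u * u * u * d) + 12 * (b * u * u * u * u * u))"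
    using assms by (intro add_nonneg_nonneg mult_nonneg_nonneg; simp)
  then show ?thesis using e by linarith
qed

lemma per_res:
  fixes a b w1 w2 :: real
  assumes "0 \<le> a" "0 \<le> b" "0 \<le> w2" "w2 \<le> w1"
  shows "res_lhs a b w1 w2 s1 s2 t1 t2 \<le> res_rhs a b w1 w2 s1 s2 t1 t2"
proof -
  define d where "d = w1 - w2"
  have w1: "w1 = w2 + d" and d: "0 \<le> d" using assms by (auto simp: d_def)
  note R = res_0000[OF assms(1,2,3) d] res_0001[OF assms(1,2,3) d] res_0010[OF assms(1,2,3) d]
    res_0011[OF assms(1,2,3) d] res_0100[OF assms(1,2,3) d] res_0101[OF assms(1,2,3) d]
    res_0110[OF assms(1,2,3) d] res_0111[OF assms(1,2,3) d] res_1000[OF assms(1,2,3) d]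
    res_1001[OF assms(1,2,3) d] res_1010[OF assms(1,2,3) d] res_1011[OF assms(1,2,3) d]
    res_1100[OF assms(1,2,3) d] res_1101[OF assms(1,2,3) d] res_1110[OF assms(1,2,3) d]
    res_1111[OF assms(1,2,3) d]
  have "\<forall>s1 s2 t1 t2. res_lhs a b (w2+d) w2 s1 s2 t1 t2 \<le> res_rhs a b (w2+d) w2 s1 s2 t1 t2"
    by (simp only: all_bool_eq R simp_thms)
  then have "res_lhs a b (w2+d) w2 s1 s2 t1 t2 \<le> res_rhs a b (w2+d) w2 s1 s2 t1 t2" by blast
  then show ?thesis using w1 by simp
qed

lemma sum_restrict:
  assumes "finite R" "S \<subseteq> R"
  shows "sum f S = (\<Sum>r\<in>R. if r \<in> S then f r else 0)"
proof -
  have "sum f (R \<inter> S) = (\<Sum>r\<in>R. if r \<in> S then f r else 0)"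
    using sum.inter_restrict[OF assms(1)] by blast
  moreover have "R \<inter> S = S" using assms by blast
  ultimately show ?thesis by simp
qed

lemma load_ind: "load w1 w2 S1 S2 r = ind (r \<in> S1) w1 + ind (r \<in> S2) w2"
  by (simp add: load_def ind_def)

lemma cost1_R:
  assumes "finite R" "S1 \<subseteq> R"
  shows "cost1 a b w1 w2 S1 S2 = (\<Sum>r\<in>R. ind (r \<in> S1) w1 * (a r + b r * (ind (r \<in> S1) w1 + ind (r \<in> S2) w2)))"
proof -
  have "cost1 a b w1 w2 S1 S2 = w1 * (\<Sum>r\<in>R. if r \<in> S1 then a r + b r * load w1 w2 S1 S2 r else 0)"
    unfolding cost1_def by (subst sum_restrict[OF assms]) (rule refl)
  also have "\<dots> = (\<Sum>r\<in>R. ind (r \<in> S1) w1 * (a r + b r * (ind (r \<in> S1) w1 + ind (r \<in> S2) w2)))"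
    by (auto simp: sum_distrib_left load_ind ind_def intro!: sum.cong)
  finally show ?thesis .
qed

lemma cost2_R:
  assumes "finite R" "S2 \<subseteq> R"
  shows "cost2 a b w1 w2 S1 S2 = (\<Sum>r\<in>R. ind (r \<in> S2) w2 * (a r + b r * (ind (r \<in> S1) w1 + ind (r \<in> S2) w2)))"
proof -
  have "cost2 a b w1 w2 S1 S2 = w2 * (\<Sum>r\<in>R. if r \<in> S2 then a r + b r * load w1 w2 S1 S2 r else 0)"
    unfolding cost2_def by (subst sum_restrict[OF assms]) (rule refl)
  also have "\<dots> = (\<Sum>r\<in>R. ind (r \<in> S2) w2 * (a r + b r * (ind (r \<in> S1) w1 + ind (r \<in> S2) w2)))"
    by (auto simp: sum_distrib_left load_ind ind_def intro!: sum.cong)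
  finally show ?thesis .
qed

lemma SC_R:
  assumes "finite R" "S1 \<subseteq> R" "S2 \<subseteq> R"
  shows "social_cost a b w1 w2 S1 S2 = (\<Sum>r\<in>R. (ind (r \<in> S1) w1 + ind (r \<in> S2) w2) * (a r + b r * (ind (r \<in> S1) w1 + ind (r \<in> S2) w2)))"
  unfolding social_cost_def cost1_R[OF assms(1,2)] cost2_R[OF assms(1,3)]
  by (simp add: sum.distrib[symmetric] distrib_right)

lemma sum_comb:
  fixes D K :: real
  shows "(\<Sum>r\<in>R. D * f r + K * (g r - h r) + D * (k r - l r))
    = D * sum f R + K * (sum g R - sum h R) + D * (sum k R - sum l R)"
  by (simp add: sum.distrib sum_subtractf sum_distrib_left right_diff_distrib)

lemma ub_ordered:
  assumes vg: "valid_game R a b A1 A2" and ne: "is_NE a b w1 w2 A1 A2 S1 S2"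
    and T: "T1 \<in> A1" "T2 \<in> A2" and w: "0 \<le> w2" "w2 \<le> w1"
  shows "(w1*w1*w1 + w1*w2*w2 + w2*w2*w2) * social_cost a b w1 w2 S1 S2
     \<le> (w1 + w2) * (w1*w1 + w1*w2 + w2*w2) * social_cost a b w1 w2 T1 T2"
proof -
  define Dn where "Dn = w1*w1*w1 + w1*w2*w2 + w2*w2*w2"
  define Q where "Q = w1*w1 + w1*w2 + w2*w2"
  have fin: "finite R" and ab: "\<And>r. r \<in> R \<Longrightarrow> 0 \<le> a r \<and> 0 \<le> b r"
    using vg by (auto simp: valid_game_def)
  have S: "S1 \<in> A1" "S2 \<in> A2" and ne1: "cost1 a b w1 w2 S1 S2 \<le> cost1 a b w1 w2 T1 S2"
    and ne2: "cost2 a b w1 w2 S1 S2 \<le> cost2 a b w1 w2 S1 T2"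
    using ne T by (auto simp: is_NE_def)
  have sub: "S1 \<subseteq> R" "S2 \<subseteq> R" "T1 \<subseteq> R" "T2 \<subseteq> R"
    using vg S T by (auto simp: valid_game_def)
  have w1: "0 \<le> w1" using w by linarith
  have DnQ: "0 \<le> Dn" "0 \<le> Q" unfolding Dn_def Q_def using w w1 by simp_all
  have "(\<Sum>r\<in>R. res_lhs (a r) (b r) w1 w2 (r \<in> S1) (r \<in> S2) (r \<in> T1) (r \<in> T2))
      \<le> (\<Sum>r\<in>R. res_rhs (a r) (b r) w1 w2 (r \<in> S1) (r \<in> S2) (r \<in> T1) (r \<in> T2))"
    by (rule sum_mono) (use ab w in \<open>auto intro: per_res\<close>)
  also have "\<dots> = (w1 + w2) * Q * social_cost a b w1 w2 T1 T2"
    unfolding res_rhs_def SC_R[OF fin sub(3,4)] Q_def by (simp add: sum_distrib_left)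
  finally have A: "(\<Sum>r\<in>R. res_lhs (a r) (b r) w1 w2 (r \<in> S1) (r \<in> S2) (r \<in> T1) (r \<in> T2))
      \<le> (w1 + w2) * Q * social_cost a b w1 w2 T1 T2" .
  have "(\<Sum>r\<in>R. res_lhs (a r) (b r) w1 w2 (r \<in> S1) (r \<in> S2) (r \<in> T1) (r \<in> T2))
     = Dn * social_cost a b w1 w2 S1 S2 + (w1 * Q) * (cost1 a b w1 w2 T1 S2 - cost1 a b w1 w2 S1 S2)
       + Dn * (cost2 a b w1 w2 S1 T2 - cost2 a b w1 w2 S1 S2)"
    unfolding res_lhs_def SC_R[OF fin sub(1,2)] cost1_R[OF fin sub(1)] cost1_R[OF fin sub(3)]
      cost2_R[OF fin sub(2)] cost2_R[OF fin sub(4)] Dn_def Q_def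
    by (rule sum_comb)
  moreover have "0 \<le> (w1 * Q) * (cost1 a b w1 w2 T1 S2 - cost1 a b w1 w2 S1 S2)"
    using ne1 DnQ w1 by simp
  moreover have "0 \<le> Dn * (cost2 a b w1 w2 S1 T2 - cost2 a b w1 w2 S1 S2)"
    using ne2 DnQ by simp
  ultimately show ?thesis using A unfolding Dn_def Q_def by linarith
qed


lemma load_sw: "load w2 w1 S2 S1 r = load w1 w2 S1 S2 r"
  by (simp add: load_def)

lemma cost_sw: "cost1 a b w2 w1 S2 S1 = cost2 a b w1 w2 S1 S2"
  "cost2 a b w2 w1 S2 S1 = cost1 a b w1 w2 S1 S2"
  unfolding cost1_def cost2_def by (simp_all only: load_sw)

lemma sc_sw: "social_cost a b w2 w1 S2 S1 = social_cost a b w1 w2 S1 S2"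
  unfolding social_cost_def cost_sw(1)[of a b w2 w1 S2 S1] cost_sw(2)[of a b w2 w1 S2 S1] by (rule add.commute)

lemma opt_sw: "opt_cost a b w2 w1 A2 A1 = opt_cost a b w1 w2 A1 A2"
proof -
  have "{social_cost a b w2 w1 S1 S2 | S1 S2. S1 \<in> A2 \<and> S2 \<in> A1}
      = {social_cost a b w1 w2 S1 S2 | S1 S2. S1 \<in> A1 \<and> S2 \<in> A2}"
  proof (intro set_eqI iffI)
    fix v assume "v \<in> {social_cost a b w2 w1 S1 S2 | S1 S2. S1 \<in> A2 \<and> S2 \<in> A1}"
    then obtain S1 S2 where "v = social_cost a b w2 w1 S1 S2" "S1 \<in> A2" "S2 \<in> A1" by blast
    moreover have "social_cost a b w2 w1 S1 S2 = social_cost a b w1 w2 S2 S1" by (rule sc_sw)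
    ultimately show "v \<in> {social_cost a b w1 w2 S1 S2 | S1 S2. S1 \<in> A1 \<and> S2 \<in> A2}" by blast
  next
    fix v assume "v \<in> {social_cost a b w1 w2 S1 S2 | S1 S2. S1 \<in> A1 \<and> S2 \<in> A2}"
    then obtain S1 S2 where "v = social_cost a b w1 w2 S1 S2" "S1 \<in> A1" "S2 \<in> A2" by blast
    moreover have "social_cost a b w2 w1 S2 S1 = social_cost a b w1 w2 S1 S2" by (rule sc_sw)
    ultimately have "\<exists>X Y. v = social_cost a b w2 w1 X Y \<and> X \<in> A2 \<and> Y \<in> A1"
      by (intro exI[of _ S2] exI[of _ S1]) simp
    then show "v \<in> {social_cost a b w2 w1 S1 S2 | S1 S2. S1 \<in> A2 \<and> S2 \<in> A1}" by simp
  qed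
  then show ?thesis by (simp add: opt_cost_def)
qed

lemma ne_sw: "is_NE a b w2 w1 A2 A1 S2 S1 = is_NE a b w1 w2 A1 A2 S1 S2"
  unfolding is_NE_def cost_sw(1)[of a b w2 w1] cost_sw(2)[of a b w2 w1] by auto

lemma vg_sw: "valid_game R a b A2 A1 = valid_game R a b A1 A2"
  by (auto simp: valid_game_def)

lemma poa_sw:
  assumes "x \<in> poa_ratios w1 w2" shows "x \<in> poa_ratios w2 w1"
proof -
  obtain R a b A1 A2 S1 S2 where h: "x = social_cost a b w1 w2 S1 S2 / opt_cost a b w1 w2 A1 A2"
    "valid_game R a b A1 A2" "opt_cost a b w1 w2 A1 A2 > 0" "is_NE a b w1 w2 A1 A2 S1 S2"
    using assms unfolding poa_ratios_def by blast
  then have "x = social_cost a b w2 w1 S2 S1 / opt_cost a b w2 w1 A2 A1 \<and> valid_game R a b A2 A1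
     \<and> opt_cost a b w2 w1 A2 A1 > 0 \<and> is_NE a b w2 w1 A2 A1 S2 S1"
    by (simp only: sc_sw[of a b w2 w1 S2 S1] opt_sw[of a b w2 w1 A2 A1] ne_sw[of a b w2 w1 A2 A1 S2 S1]
      vg_sw[of R a b A2 A1])
  then show ?thesis unfolding poa_ratios_def by blast
qed

lemma net_sw:
  assumes "x \<in> network_ratios w1 w2" shows "x \<in> network_ratios w2 w1"
proof -
  obtain E src dst s1 t1 s2 t2 a b S1 S2 where h:
    "x = social_cost a b w1 w2 S1 S2 / opt_cost a b w1 w2 (paths E src dst s1 t1) (paths E src dst s2 t2)"
    "valid_game E a b (paths E src dst s1 t1) (paths E src dst s2 t2)"
    "opt_cost a b w1 w2 (paths E src dst s1 t1) (paths E src dst s2 t2) > 0"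
    "is_NE a b w1 w2 (paths E src dst s1 t1) (paths E src dst s2 t2) S1 S2"
    using assms unfolding network_ratios_def by blast
  then have "x = social_cost a b w2 w1 S2 S1 / opt_cost a b w2 w1 (paths E src dst s2 t2) (paths E src dst s1 t1)
     \<and> valid_game E a b (paths E src dst s2 t2) (paths E src dst s1 t1)
     \<and> opt_cost a b w2 w1 (paths E src dst s2 t2) (paths E src dst s1 t1) > 0
     \<and> is_NE a b w2 w1 (paths E src dst s2 t2) (paths E src dst s1 t1) S2 S1"
    by (simp only: sc_sw[of a b w2 w1 S2 S1] opt_sw[of a b w2 w1 "paths E src dst s2 t2" "paths E src dst s1 t1"]
      ne_sw[of a b w2 w1 "paths E src dst s2 t2" "paths E src dst s1 t1" S2 S1]
      vg_sw[of E a b "paths E src dst s2 t2" "paths E src dst s1 t1"])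
  then show ?thesis unfolding network_ratios_def by blast
qed

lemma net_sub: "network_ratios w1 w2 \<subseteq> poa_ratios w1 w2"
  unfolding network_ratios_def poa_ratios_def by blast

lemma opt_attained:
  assumes "valid_game R a b A1 A2"
  shows "\<exists>T1\<in>A1. \<exists>T2\<in>A2. opt_cost a b w1 w2 A1 A2 = social_cost a b w1 w2 T1 T2"
proof -
  have eq: "{social_cost a b w1 w2 S1 S2 | S1 S2. S1 \<in> A1 \<and> S2 \<in> A2}
      = (\<lambda>(S1, S2). social_cost a b w1 w2 S1 S2) ` (A1 \<times> A2)" by auto
  have "finite (A1 \<times> A2)" "A1 \<times> A2 \<noteq> {}" using assms by (auto simp: valid_game_def)
  then have "Min ((\<lambda>(S1, S2). social_cost a b w1 w2 S1 S2) ` (A1 \<times> A2))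
      \<in> (\<lambda>(S1, S2). social_cost a b w1 w2 S1 S2) ` (A1 \<times> A2)"
    by (intro Min_in) auto
  then show ?thesis unfolding opt_cost_def eq by auto
qed

lemma poa_le_ordered:
  assumes H: "\<And>w1 w2. 0 \<le> w1 \<Longrightarrow> 0 \<le> w2 \<Longrightarrow>
      (w1 + w2) * (w1*w1 + w1*w2 + w2*w2) \<le> \<rho> * (w1*w1*w1 + w1*w2*w2 + w2*w2*w2)"
    and w: "0 \<le> w2" "w2 \<le> w1" "0 < w1" and x: "x \<in> poa_ratios w1 w2"
  shows "x \<le> \<rho>"
proof -
  obtain R a b A1 A2 S1 S2 where h: "x = social_cost a b w1 w2 S1 S2 / opt_cost a b w1 w2 A1 A2"
    "valid_game R a b A1 A2" "opt_cost a b w1 w2 A1 A2 > 0" "is_NE a b w1 w2 A1 A2 S1 S2"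
    using x unfolding poa_ratios_def by blast
  obtain T1 T2 where T: "T1 \<in> A1" "T2 \<in> A2" "opt_cost a b w1 w2 A1 A2 = social_cost a b w1 w2 T1 T2"
    using opt_attained[OF h(2)] by blast
  define Dn where "Dn = w1*w1*w1 + w1*w2*w2 + w2*w2*w2"
  have Dpos: "0 < Dn" unfolding Dn_def using w by (simp add: add_pos_nonneg)
  have "Dn * social_cost a b w1 w2 S1 S2 \<le> (w1 + w2) * (w1*w1 + w1*w2 + w2*w2) * social_cost a b w1 w2 T1 T2"
    unfolding Dn_def by (rule ub_ordered[OF h(2) h(4) T(1,2) w(1,2)])
  also have "\<dots> \<le> \<rho> * Dn * social_cost a b w1 w2 T1 T2"
    using H[of w1 w2] w h(3) T(3) unfolding Dn_def by (intro mult_right_mono) auto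
  finally have "Dn * social_cost a b w1 w2 S1 S2 \<le> Dn * (\<rho> * opt_cost a b w1 w2 A1 A2)"
    using T(3) by (simp add: mult_ac)
  then have "social_cost a b w1 w2 S1 S2 \<le> \<rho> * opt_cost a b w1 w2 A1 A2"
    using Dpos by simp
  then show ?thesis using h(1,3) by (simp add: divide_le_eq)
qed

lemma poa_le:
  assumes H: "\<And>w1 w2. 0 \<le> w1 \<Longrightarrow> 0 \<le> w2 \<Longrightarrow>
      (w1 + w2) * (w1*w1 + w1*w2 + w2*w2) \<le> \<rho> * (w1*w1*w1 + w1*w2*w2 + w2*w2*w2)"
    and w: "admissible_weights w1 w2" and x: "x \<in> poa_ratios w1 w2"
  shows "x \<le> \<rho>"
proof (cases "w2 \<le> w1")
  case True
  then show ?thesis using poa_le_ordered[OF H _ True _ x] w by (auto simp: admissible_weights_def)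
next
  case False
  have H': "\<And>w1 w2. 0 \<le> w1 \<Longrightarrow> 0 \<le> w2 \<Longrightarrow>
      (w1 + w2) * (w1*w1 + w1*w2 + w2*w2) \<le> \<rho> * (w1*w1*w1 + w1*w2*w2 + w2*w2*w2)" by (rule H)
  show ?thesis using poa_le_ordered[OF H' _ _ _ poa_sw[OF x]] False w
    by (auto simp: admissible_weights_def)
qed


inductive walk :: "nat set \<Rightarrow> (nat \<Rightarrow> nat) \<Rightarrow> (nat \<Rightarrow> nat) \<Rightarrow> nat \<Rightarrow> nat \<Rightarrow> nat set \<Rightarrow> bool"
  for E src dst where
  wnil: "walk E src dst s s {}"
| wcons: "e \<in> E \<Longrightarrow> src e = s \<Longrightarrow> walk E src dst (dst e) t P \<Longrightarrow> walk E src dst s t (insert e P)"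

lemma list_walk:
  "\<forall>vs s. set es \<subseteq> E \<longrightarrow> length vs = length es + 1 \<longrightarrow> vs ! 0 = s \<longrightarrow> vs ! length es = t
    \<longrightarrow> (\<forall>i<length es. src (es ! i) = vs ! i \<and> dst (es ! i) = vs ! (i + 1))
    \<longrightarrow> walk E src dst s t (set es)"
proof (induction es)
  case Nil
  then show ?case by (auto intro: wnil)
next
  case (Cons e es)
  show ?case
  proof (intro allI impI)
    fix vs s
    assume h: "set (e # es) \<subseteq> E" "length vs = length (e # es) + 1" "vs ! 0 = s"
      "vs ! length (e # es) = t"
      "\<forall>i<length (e # es). src ((e # es) ! i) = vs ! i \<and> dst ((e # es) ! i) = vs ! (i + 1)"
    obtain v vs' where vs: "vs = v # vs'" using h(2) by (cases vs) auto
    have e: "src e = s" "dst e = vs' ! 0" using h(3,5) vs by (auto dest: spec[of _ 0])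
    have "walk E src dst (dst e) t (set es)"
    proof (rule Cons.IH[rule_format])
      show "set es \<subseteq> E" using h(1) by auto
      show "length vs' = length es + 1" using h(2) vs by simp
      show "vs' ! 0 = dst e" using e by simp
      show "vs' ! length es = t" using h(4) vs by simp
      fix i assume "i < length es"
      then show "src (es ! i) = vs' ! i \<and> dst (es ! i) = vs' ! (i + 1)"
        using h(5) vs by (auto dest: spec[of _ "Suc i"])
    qed
    then show "walk E src dst s t (set (e # es))" using h(1) e by (auto intro: wcons)
  qed
qed

lemma path_walk: "is_st_path E src dst s t P \<Longrightarrow> walk E src dst s t P"
  unfolding is_st_path_def using list_walk by blast

definition srcL :: "nat \<Rightarrow> nat" where "srcL e = [0,2,3,1,3,0,4,5,1,5] ! e"
definition dstL :: "nat \<Rightarrow> nat" where "dstL e = [2,3,6,2,7,4,5,6,4,7] ! e"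
definition EN :: "nat set" where "EN = {..<10}"

definition W6 :: "nat \<Rightarrow> nat set set" where
  "W6 v = (if v = 6 then {{}} else if v = 3 then {{2}} else if v = 5 then {{7}}
     else if v = 2 then {{1,2}} else if v = 4 then {{6,7}} else if v = 0 then {{0,1,2},{5,6,7}}
     else if v = 1 then {{3,1,2},{8,6,7}} else {})"

definition W7 :: "nat \<Rightarrow> nat set set" where
  "W7 v = (if v = 7 then {{}} else if v = 3 then {{4}} else if v = 5 then {{9}}
     else if v = 2 then {{1,4}} else if v = 4 then {{6,9}} else if v = 0 then {{0,1,4},{5,6,9}}
     else if v = 1 then {{3,1,4},{8,6,9}} else {})"

lemma walk_W:
  assumes "walk EN srcL dstL v t P"
  shows "(t = 6 \<longrightarrow> P \<in> W6 v) \<and> (t = 7 \<longrightarrow> P \<in> W7 v)"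
  using assms
proof (induction rule: walk.induct)
  case (wnil s)
  then show ?case by (simp add: W6_def W7_def)
next
  case (wcons e s t P)
  have "e = 0 \<or> e = 1 \<or> e = 2 \<or> e = 3 \<or> e = 4 \<or> e = 5 \<or> e = 6 \<or> e = 7 \<or> e = 8 \<or> e = 9"
    using wcons.hyps(1) by (auto simp: EN_def)
  then show ?case using wcons.hyps(2) wcons.IH
    by (elim disjE) (auto simp: W6_def W7_def srcL_def dstL_def)
qed

lemma all3: "(\<forall>i<(3::nat). P i) \<longleftrightarrow> P 0 \<and> P 1 \<and> P 2"
  by (auto simp: numeral_3_eq_3 numeral_2_eq_2 less_Suc_eq)

lemma mkpath:
  assumes "set es \<subseteq> EN" "distinct es" "length es = 3" "length vs = 4" "distinct vs"
    "vs ! 0 = s" "vs ! 3 = t"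
    "\<forall>i<3. srcL (es ! i) = vs ! i \<and> dstL (es ! i) = vs ! (i + 1)"
  shows "is_st_path EN srcL dstL s t (set es)"
  unfolding is_st_path_def using assms by (intro exI[of _ es] exI[of _ vs]) simp

lemma paths1: "paths EN srcL dstL 0 6 = {{0,1,2},{5,6,7}}"
proof
  show "paths EN srcL dstL 0 6 \<subseteq> {{0,1,2},{5,6,7}}"
    using walk_W path_walk unfolding paths_def W6_def by fastforce
  have "is_st_path EN srcL dstL 0 6 (set [0,1,2])"
    by (rule mkpath[where vs="[0,2,3,6]"]) (simp_all add: EN_def all3 srcL_def dstL_def)
  moreover have "is_st_path EN srcL dstL 0 6 (set [5,6,7])"
    by (rule mkpath[where vs="[0,4,5,6]"]) (simp_all add: EN_def all3 srcL_def dstL_def)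
  ultimately show "{{0,1,2},{5,6,7}} \<subseteq> paths EN srcL dstL 0 6"
    by (simp add: paths_def)
qed


lemma paths2: "paths EN srcL dstL 1 7 = {{3,1,4},{8,6,9}}"
proof
  show "paths EN srcL dstL 1 7 \<subseteq> {{3,1,4},{8,6,9}}"
    using walk_W path_walk unfolding paths_def W7_def by fastforce
  have "is_st_path EN srcL dstL 1 7 (set [3,1,4])"
    by (rule mkpath[where vs="[1,2,3,7]"]) (simp_all add: EN_def all3 srcL_def dstL_def)
  moreover have "is_st_path EN srcL dstL 1 7 (set [8,6,9])"
    by (rule mkpath[where vs="[1,4,5,7]"]) (simp_all add: EN_def all3 srcL_def dstL_def)
  ultimately show "{{3,1,4},{8,6,9}} \<subseteq> paths EN srcL dstL 1 7"
    by (simp add: paths_def)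
qed

lemma set4: "{f S1 S2 | S1 S2. S1 \<in> {p, q} \<and> S2 \<in> {r, s}} = {f p r, f p s, f q r, f q s}"
  by blast

lemma construction:
  fixes l :: real
  assumes l: "0 < l"
  shows "(l^3 + 2*l^2 + 2*l + 1) / (l^3 + l + 1) \<in> network_ratios l 1"
proof -
  define y where "y = l / (l + 1)"
  define x where "x = (l^2 + l + 1) / (l + 1)"
  define a where "a = (\<lambda>r::nat. if r = 3 then x else 0)"
  define b where "b = (\<lambda>r::nat. if r = 1 then y else if r = 6 then 1 else (0::real))"
  have hy: "y * (l + 1) = l" and hx: "x * (l + 1) = l^2 + l + 1"
    using l by (simp_all add: y_def x_def field_simps power2_eq_square)
  have "(x + y) * (l + 1) = (l + 1) * (l + 1)" using hx hy by (simp add: algebra_simps power2_eq_square)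
  then have xy: "x + y = l + 1" using l by simp
  have y0: "0 \<le> y" "y \<le> 1" and x0: "0 \<le> x" using l by (simp_all add: y_def x_def)
  define A1 where "A1 = ({5,6,7} :: nat set)"
  define B1 where "B1 = ({0,1,2} :: nat set)"
  define A2 where "A2 = ({3,1,4} :: nat set)"
  define B2 where "B2 = ({8,6,9} :: nat set)"
  have P1: "paths EN srcL dstL 0 6 = {B1, A1}" using paths1 by (simp add: A1_def B1_def)
  have P2: "paths EN srcL dstL 1 7 = {A2, B2}" using paths2 by (simp add: A2_def B2_def)
  have c1: "cost1 a b l 1 A1 A2 = l * l" "cost1 a b l 1 B1 A2 = l * (y * (l + 1))"
    "cost1 a b l 1 A1 B2 = l * (l + 1)" "cost1 a b l 1 B1 B2 = l * (y * l)"
    by (simp_all add: cost1_def load_def a_def b_def A1_def A2_def B1_def B2_def)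
  have c2: "cost2 a b l 1 A1 A2 = x + y" "cost2 a b l 1 B1 A2 = x + y * (l + 1)"
    "cost2 a b l 1 A1 B2 = l + 1" "cost2 a b l 1 B1 B2 = 1"
    by (simp_all add: cost2_def load_def a_def b_def A1_def A2_def B1_def B2_def)
  define oo where "oo = l * (y * l) + 1"
  have opos: "0 < oo" using l y0 by (simp add: oo_def add_nonneg_pos)
  have ooeq: "oo * (l + 1) = l^3 + l + 1"
    unfolding oo_def using hy by (simp add: algebra_simps power2_eq_square power3_eq_cube)
  have setq: "{social_cost a b l 1 S1 S2 | S1 S2. S1 \<in> {B1, A1} \<and> S2 \<in> {A2, B2}}
     = {l * (y * (l + 1)) + (x + y * (l + 1)), oo, l * l + (x + y), l * (l + 1) + (l + 1)}"
    unfolding set4 by (simp add: social_cost_def c1 c2 oo_def)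
  have ole: "oo \<le> l * (y * (l + 1)) + (x + y * (l + 1))" "oo \<le> l * l + (x + y)"
      "oo \<le> l * (l + 1) + (l + 1)"
  proof -
    have m0: "l * l * y \<le> l * l * 1" using y0 l by (intro mult_left_mono) auto
    have m: "l * (y * l) \<le> l * l" using m0 by (simp add: mult_ac)
    have "0 \<le> l * y" using y0 l by simp
    then have yl: "y \<le> l" using hy by (simp add: algebra_simps)
    have "0 \<le> l * l" by simp
    have ly: "0 \<le> l * y" "0 \<le> y * l" using l y0 by simp_all
    show "oo \<le> l * (y * (l + 1)) + (x + y * (l + 1))"
      unfolding oo_def distrib_left mult_1_right using m yl xy l ly by linarith
    show "oo \<le> l * l + (x + y)"
      unfolding oo_def using m yl xy l ly by linarith
    show "oo \<le> l * (l + 1) + (l + 1)"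
      unfolding oo_def distrib_left mult_1_right using m yl xy l ly by linarith
  qed
  have opt: "opt_cost a b l 1 {B1, A1} {A2, B2} = oo"
    unfolding opt_cost_def setq using ole by (intro Min_eqI) auto
  have vg: "valid_game EN a b {B1, A1} {A2, B2}"
    using x0 y0 by (auto simp: valid_game_def EN_def a_def b_def A1_def A2_def B1_def B2_def)
  have ne: "is_NE a b l 1 {B1, A1} {A2, B2} A1 A2"
    using hy xy by (auto simp: is_NE_def c1 c2)
  have ratio: "social_cost a b l 1 A1 A2 / oo = (l^3 + 2*l^2 + 2*l + 1) / (l^3 + l + 1)"
  proof -
    have "social_cost a b l 1 A1 A2 = l * l + (l + 1)" by (simp add: social_cost_def c1 c2 xy)
    moreover have o2: "oo = (l^3 + l + 1) / (l + 1)" using ooeq l by (simp add: eq_divide_eq)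
    moreover have "(l * l + (l + 1)) * (l + 1) = l^3 + 2*l^2 + 2*l + 1"
      by (simp add: algebra_simps power2_eq_square power3_eq_cube)
    ultimately show ?thesis by simp
  qed
  show ?thesis unfolding network_ratios_def
    using vg ne opt opos ratio P1 P2
    by (intro CollectI exI[of _ EN] exI[of _ srcL] exI[of _ dstL] exI[of _ 0] exI[of _ 6]
        exI[of _ 1] exI[of _ 7] exI[of _ a] exI[of _ b] exI[of _ A1] exI[of _ A2]) simp
qed


lemma root_exists:
  "\<exists>l::real. 1270361/1000000 \<le> l \<and> l \<le> 1270362/1000000 \<and> 2*l^4 + 2*l^3 - 2*l^2 - 4*l - 1 = 0"
proof -
  have "\<exists>l. 1270361/1000000 \<le> l \<and> l \<le> 1270362/1000000 \<and> (\<lambda>l::real. 2*l^4 + 2*l^3 - 2*l^2 - 4*l - 1) l = 0"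
    by (rule IVT) (auto intro!: continuous_intros simp: power_divide)
  then show ?thesis by simp
qed

lemma key_ineq:
  fixes l :: real
  assumes l: "0 < l" and p: "2*l^4 + 2*l^3 - 2*l^2 - 4*l - 1 = 0"
    and w: "0 \<le> w1" "0 \<le> w2"
  shows "(w1 + w2) * (w1*w1 + w1*w2 + w2*w2)
      \<le> ((l^3 + 2*l^2 + 2*l + 1) / (l^3 + l + 1)) * (w1*w1*w1 + w1*w2*w2 + w2*w2*w2)"
proof -
  define r where "r = (l^3 + 2*l^2 + 2*l + 1) / (l^3 + l + 1)"
  define D where "D = l^3 + l + 1"
  have Dpos: "0 < D" unfolding D_def using l by (simp add: add_pos_pos)
  have rD: "r * D = l^3 + 2*l^2 + 2*l + 1" unfolding r_def D_def using Dpos D_def by simp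
  have r1: "(r - 1) * D = 2*l^2 + l" using rD unfolding D_def by (simp add: algebra_simps)
  have "(r - 1) * (1 - 2*l^3) * D = -2*l^2 * D"
  proof -
    have "(r - 1) * (1 - 2*l^3) * D = (2*l^2 + l) * (1 - 2*l^3)" using r1 by (simp add: mult_ac)
    also have "\<dots> = -2*l^2 * D" using p unfolding D_def by algebra
    finally show ?thesis .
  qed
  then have e1: "(r - 1) * (1 - 2*l^3) = -2*l^2" using Dpos by (metis mult_right_cancel order_less_irrefl)
  have "(r - 1) * (l^3 - 2) * D = (r - 2) * l * D"
  proof -
    have "(r - 1) * (l^3 - 2) * D = (2*l^2 + l) * (l^3 - 2)" using r1 by (simp add: mult_ac)
    also have "\<dots> = l * ((l^3 + 2*l^2 + 2*l + 1) - 2 * D)" using p unfolding D_def by algebra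
    also have "\<dots> = (r - 2) * l * D" using rD by algebra
    finally show ?thesis .
  qed
  then have e2: "(r - 1) * (l^3 - 2) = (r - 2) * l" using Dpos by (metis mult_right_cancel order_less_irrefl)
  define k where "k = (r - 1) / l^2"
  have k0: "k * l^2 = r - 1" unfolding k_def using l by simp
  have c2: "k - 2*l*(r - 1) = -2"
  proof -
    have "(k - 2*l*(r - 1)) * l^2 = -2 * l^2" using k0 e1 by algebra
    moreover have "l^2 \<noteq> 0" using l by simp
    ultimately show ?thesis by (metis mult_right_cancel)
  qed
  have c1: "-2*l*k + l^2*(r - 1) = r - 2"
  proof -
    have "(-2*l*k + l^2*(r - 1)) * l = (r - 2) * l" using k0 e2 by algebra
    moreover have "l \<noteq> 0" using l by simp
    ultimately show ?thesis by (metis mult_right_cancel)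
  qed
  have "0 \<le> (r - 1) * D" using r1 l by simp
  then have rpos: "0 \<le> r - 1" using Dpos by (simp add: zero_le_mult_iff)
  have kpos: "0 \<le> k" unfolding k_def using rpos by simp
  have ident: "r * (w1*w1*w1 + w1*w2*w2 + w2*w2*w2) - (w1 + w2) * (w1*w1 + w1*w2 + w2*w2)
      = (w1 - l*w2)^2 * ((r - 1)*w1 + k*w2)"
    using k0 c1 c2 by algebra
  have "0 \<le> (w1 - l*w2)^2 * ((r - 1)*w1 + k*w2)"
    using rpos kpos w by (intro mult_nonneg_nonneg add_nonneg_nonneg) auto
  then show ?thesis using ident unfolding r_def by linarith
qed

lemma sup_isI:
  assumes "\<rho> \<in> S" "\<And>x. x \<in> S \<Longrightarrow> x \<le> \<rho>"
  shows "sup_is S \<rho>"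
  unfolding sup_is_def using assms
  by (auto intro!: cSup_eq_maximum bdd_aboveI[of S \<rho>])


theorem corollary2:
  shows "\<exists>\<rho>::real. \<bar>\<rho> - 2.0411\<bar> \<le> 0.00005
    \<and> sup_is poa_all \<rho> \<and> sup_is network_poa_all \<rho>
    \<and> (\<exists>w1 w2. w1 > 0 \<and> w2 > 0 \<and> \<bar>w1 / w2 - 1.2704\<bar> \<le> 0.00005
          \<and> sup_is (poa_ratios w1 w2) \<rho> \<and> sup_is (network_ratios w1 w2) \<rho>)
    \<and> (\<exists>w1 w2. w1 > 0 \<and> w2 > 0 \<and> \<bar>w2 / w1 - 1.2704\<bar> \<le> 0.00005
          \<and> sup_is (poa_ratios w1 w2) \<rho> \<and> sup_is (network_ratios w1 w2) \<rho>)"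
proof -
  obtain l :: real where lb: "1270361/1000000 \<le> l" "l \<le> 1270362/1000000"
    and p: "2*l^4 + 2*l^3 - 2*l^2 - 4*l - 1 = 0"
    using root_exists by blast
  have l0: "0 < l" using lb by linarith
  define \<rho> where "\<rho> = (l^3 + 2*l^2 + 2*l + 1) / (l^3 + l + 1)"
  have H: "\<And>w1 w2. 0 \<le> w1 \<Longrightarrow> 0 \<le> w2 \<Longrightarrow>
      (w1 + w2) * (w1*w1 + w1*w2 + w2*w2) \<le> \<rho> * (w1*w1*w1 + w1*w2*w2 + w2*w2*w2)"
    unfolding \<rho>_def by (rule key_ineq[OF l0 p])
  have up: "x \<le> \<rho>" if "admissible_weights w1 w2" "x \<in> poa_ratios w1 w2" for w1 w2 x
    by (rule poa_le[where \<rho>=\<rho>, OF H that])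
  have upn: "x \<le> \<rho>" if "admissible_weights w1 w2" "x \<in> network_ratios w1 w2" for w1 w2 x
    using up[OF that(1)] net_sub that(2) by blast
  have in1: "\<rho> \<in> network_ratios l 1" unfolding \<rho>_def by (rule construction[OF l0])
  have in2: "\<rho> \<in> network_ratios 1 l" by (rule net_sw[OF in1])
  have adm1: "admissible_weights l 1" and adm2: "admissible_weights 1 l"
    using l0 by (auto simp: admissible_weights_def)
  have s1: "sup_is (poa_ratios l 1) \<rho>" "sup_is (network_ratios l 1) \<rho>"
    "sup_is (poa_ratios 1 l) \<rho>" "sup_is (network_ratios 1 l) \<rho>"
    using in1 in2 net_sub up[OF adm1] up[OF adm2] upn[OF adm1] upn[OF adm2]
    by (auto intro!: sup_isI)
  have s2: "sup_is poa_all \<rho>"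
  proof (rule sup_isI)
    show "\<rho> \<in> poa_all" unfolding poa_all_def using in1 net_sub adm1 by blast
    fix x assume "x \<in> poa_all"
    then obtain w1 w2 where "admissible_weights w1 w2" "x \<in> poa_ratios w1 w2"
      unfolding poa_all_def by blast
    then show "x \<le> \<rho>" by (rule up)
  qed
  have s3: "sup_is network_poa_all \<rho>"
  proof (rule sup_isI)
    show "\<rho> \<in> network_poa_all" unfolding network_poa_all_def using in1 adm1 by blast
    fix x assume "x \<in> network_poa_all"
    then obtain w1 w2 where "admissible_weights w1 w2" "x \<in> network_ratios w1 w2"
      unfolding network_poa_all_def by blast
    then show "x \<le> \<rho>" by (rule upn)
  qed
  have sq: "l^2 \<le> (1270362/1000000)^2" "l^3 \<le> (1270362/1000000)^3"
    "(1270361/1000000)^2 \<le> l^2" "(1270361/1000000)^3 \<le> l^3"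
    using lb l0 by (auto intro!: power_mono)
  have Dpos: "0 < l^3 + l + 1" using l0 by (simp add: add_pos_pos)
  have num: "(1270362/1000000::real)^2 = 1613819611044/1000000000000" "(1270362/1000000::real)^3 = 2050135108725077928/1000000000000000000"
    "(1270361/1000000::real)^2 = 1613817070321/1000000000000" "(1270361/1000000::real)^3 = 2050130267270055881/1000000000000000000"
    by (simp_all add: power_divide)
  have sq': "l^2 \<le> 1613819611044/1000000000000" "l^3 \<le> 2050135108725077928/1000000000000000000"
    "1613817070321/1000000000000 \<le> l^2" "2050130267270055881/1000000000000000000 \<le> l^3"
    using sq unfolding num by simp_all
  have "204115/100000 * (l^3 + l + 1) = 204115/100000 * l^3 + 204115/100000 * l + (204115/100000::real)"
    by (simp add: algebra_simps)
  then have "l^3 + 2*l^2 + 2*l + 1 \<le> 204115/100000 * (l^3 + l + 1)"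
    using sq' lb by linarith
  then have rhi: "\<rho> \<le> 204115/100000" unfolding \<rho>_def using Dpos by (simp add: divide_le_eq)
  have "204105/100000 * (l^3 + l + 1) = 204105/100000 * l^3 + 204105/100000 * l + (204105/100000::real)"
    by (simp add: algebra_simps)
  then have "204105/100000 * (l^3 + l + 1) \<le> l^3 + 2*l^2 + 2*l + 1"
    using sq' lb by linarith
  then have rlo: "204105/100000 \<le> \<rho>" unfolding \<rho>_def using Dpos by (simp add: le_divide_eq)
  have rb: "\<bar>\<rho> - 2.0411\<bar> \<le> 0.00005" using rhi rlo by (subst abs_le_iff) simp
  have lbb: "\<bar>l / 1 - 1.2704\<bar> \<le> 0.00005" using lb by (subst abs_le_iff) simp
  show ?thesis
    using rb s1 s2 s3 lbb l0 by (intro exI[of _ \<rho>] conjI exI[of _ l] exI[of _ 1]) auto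
qed

end
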